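(* There is an absolute constant $C>0$ such that the following holds. Let $k\ge1$, $\mathcal{R}>0$, and let $(\lambda_i,u_i),(\lambda_i',u_i')\in\mathbb{R}\times\mathbb{S}^{d-1}$ for $i\in[k]$ with $\sum_i|\lambda_i|\le\mathcal{R}$ and $\sum_i|\lambda_i'|\le\mathcal{R}$. Let $f_{\vec\lambda,\vec u}(x)=\sum_{i=1}^k\lambda_i\mathrm{ReLU}(\langle u_i,x\rangle)$ and similarly $f_{\vec\lambda',\vec u'}$. Then $$\|f_{\vec\lambda,\vec u}-f_{\vec\lambda',\vec u'}\|_2\le C\,k\max(1,\mathcal{R})\cdot d_{\mathsf{param}}\big((\vec\lambda,\vec u),(\vec\lambda',\vec u')\big).$$
   Context: $\mathrm{ReLU}(a)=\max(0,a)$. For $f:\mathbb{R}^d\to\mathbb{R}$, $\|f\|_2^2=\mathbb{E}_{x\sim\mathcal{N}(0,I_d)}[f(x)^2]$. The parameter distance is $d_{\mathsf{param}}((\vec\lambda,\vec u),(\vec\lambda',\vec u'))=\min_\pi\max_{i\in[k]}\{|\lambda_i-\lambda'_{\pi(i)}|+\|u_i-u'_{\pi(i)}\|\}$, the minimum over permutations $\pi$ of $[k]$, with $\|\cdot\|$ the Euclidean norm. *)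

theory Defs
  imports "HOL-Probability.Probability"
begin

text \<open>Vectors in R^d are represented as functions nat => real; only coordinates j < d matter.
  The dimension d is a variable inside the formula so that the constant C is independent of d.\<close>

definition relu :: "real \<Rightarrow> real" where
  "relu a = max 0 a"

definition inner_d :: "nat \<Rightarrow> (nat \<Rightarrow> real) \<Rightarrow> (nat \<Rightarrow> real) \<Rightarrow> real" where
  "inner_d d u x = (\<Sum>j<d. u j * x j)"

definition norm_d :: "nat \<Rightarrow> (nat \<Rightarrow> real) \<Rightarrow> real" where
  "norm_d d u = sqrt (\<Sum>j<d. (u j)\<^sup>2)"

definition gauss :: "nat \<Rightarrow> (nat \<Rightarrow> real) measure" where
  "gauss d = PiM {..<d} (\<lambda>_. density lborel std_normal_density)"

definition L2norm :: "nat \<Rightarrow> ((nat \<Rightarrow> real) \<Rightarrow> real) \<Rightarrow> real" where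
  "L2norm d f = sqrt (\<integral>x. (f x)\<^sup>2 \<partial>gauss d)"

definition relu_net ::
  "nat \<Rightarrow> nat \<Rightarrow> (nat \<Rightarrow> real) \<Rightarrow> (nat \<Rightarrow> nat \<Rightarrow> real) \<Rightarrow> (nat \<Rightarrow> real) \<Rightarrow> real" where
  "relu_net d k lam u x = (\<Sum>i<k. lam i * relu (inner_d d (u i) x))"

definition d_param ::
  "nat \<Rightarrow> nat \<Rightarrow> (nat \<Rightarrow> real) \<Rightarrow> (nat \<Rightarrow> nat \<Rightarrow> real)
     \<Rightarrow> (nat \<Rightarrow> real) \<Rightarrow> (nat \<Rightarrow> nat \<Rightarrow> real) \<Rightarrow> real" where
  "d_param d k lam u lam' u' =
     Min {Max ((\<lambda>i. \<bar>lam i - lam' (\<pi> i)\<bar> + norm_d d (\<lambda>j. u i j - u' (\<pi> i) j)) ` {..<k})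
          | \<pi>. \<pi> permutes {..<k}}"

end

theory Submission imports Defs begin

abbreviation "NN \<equiv> density lborel std_normal_density"

lemma NN_prob: "prob_space NN" by (rule prob_space_normal_density) simp

lemma NN_int: "integrable NN (\<lambda>t. t ^ m)"
  by (subst integrable_density) (auto simp: normal_density_nonneg integrable_std_normal_moment)

lemma NN_int1: "integrable NN (\<lambda>t. t)" using NN_int[of 1] by simp

lemma NN_mean: "integral\<^sup>L NN (\<lambda>t. t) = 0"
  using integral_std_normal_moment_odd[of 0]
  by (subst integral_density) (auto simp: normal_density_nonneg)

lemma NN_var: "integral\<^sup>L NN (\<lambda>t. t^2) = 1"
  using integral_std_normal_moment_even[of 1]
  by (subst integral_density) (auto simp: normal_density_nonneg)

lemma NN_one: "integral\<^sup>L NN (\<lambda>t. 1::real) = 1"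
proof -
  show ?thesis using integral_std_normal_moment_even[of 0]
  by (subst integral_density) (auto simp: normal_density_nonneg)
qed

lemma NN_meas: "measure NN UNIV = 1"
  using prob_space.prob_space[OF NN_prob] by simp

lemma NN_int_one: "integrable NN (\<lambda>t. 1::real)"
  using NN_int[of 0] by simp

interpretation PS: product_sigma_finite "\<lambda>_::nat. NN"
  unfolding product_sigma_finite_def using NN_prob prob_space_imp_sigma_finite by blast

lemma gauss_cross:
  assumes "j < d" "l < d"
  shows "integrable (gauss d) (\<lambda>x. x j * x l)"
    and "(\<integral>x. x j * x l \<partial>gauss d) = (if j = l then 1 else 0)"
proof -
  define g where "g = (\<lambda>i (t::real). if j = l then (if i = j then t^2 else 1)
      else (if i = j \<or> i = l then t else 1))"
  have gi: "integrable NN (g i)" for i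
    by (cases "j = l"; cases "i = j"; cases "i = l") (simp_all add: g_def NN_int1 NN_int NN_int_one)
  have eq: "(\<Prod>i\<in>{..<d}. g i (x i)) = x j * x l" for x
  proof (cases "j = l")
    case True
    have "(\<Prod>i\<in>{..<d}. g i (x i)) = g j (x j) * (\<Prod>i\<in>{..<d}-{j}. g i (x i))"
      using assms by (subst prod.remove[of _ j]) auto
    also have "(\<Prod>i\<in>{..<d}-{j}. g i (x i)) = 1" by (rule prod.neutral) (auto simp: g_def True)
    finally show ?thesis by (simp add: g_def True power2_eq_square)
  next
    case False
    have "(\<Prod>i\<in>{..<d}. g i (x i)) = g j (x j) * (\<Prod>i\<in>{..<d}-{j}. g i (x i))"
      using assms by (subst prod.remove[of _ j]) auto
    also have "(\<Prod>i\<in>{..<d}-{j}. g i (x i)) = g l (x l) * (\<Prod>i\<in>{..<d}-{j}-{l}. g i (x i))"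
      using assms False by (subst prod.remove[of _ l]) auto
    also have "(\<Prod>i\<in>{..<d}-{j}-{l}. g i (x i)) = 1" by (rule prod.neutral) (auto simp: g_def False)
    finally show ?thesis by (simp add: g_def False)
  qed
  have "integrable (gauss d) (\<lambda>x. (\<Prod>i\<in>{..<d}. g i (x i)))"
    unfolding gauss_def by (rule PS.product_integrable_prod) (auto intro: gi)
  then show "integrable (gauss d) (\<lambda>x. x j * x l)" by (simp add: eq)
  have "(\<integral>x. (\<Prod>i\<in>{..<d}. g i (x i)) \<partial>gauss d) = (\<Prod>i\<in>{..<d}. integral\<^sup>L NN (g i))"
    unfolding gauss_def by (rule PS.product_integral_prod) (auto intro: gi)
  also have "\<dots> = (if j = l then 1 else 0)"
  proof (cases "j = l")
    case True
    have "integral\<^sup>L NN (g i) = 1" for i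
      by (cases "i = j") (simp_all add: g_def True NN_var NN_one NN_meas)
    then show ?thesis using True by simp
  next
    case False
    have g0: "integral\<^sup>L NN (g j) = 0" by (simp add: g_def False NN_mean)
    have "(\<Prod>i\<in>{..<d}. integral\<^sup>L NN (g i)) = integral\<^sup>L NN (g j) * (\<Prod>i\<in>{..<d}-{j}. integral\<^sup>L NN (g i))"
      using assms by (subst prod.remove[of _ j]) auto
    then show ?thesis using False g0 by simp
  qed
  finally show "(\<integral>x. x j * x l \<partial>gauss d) = (if j = l then 1 else 0)" by (simp add: eq)
qed

lemma gauss_inner_sq:
  shows "integrable (gauss d) (\<lambda>x. (inner_d d v x)^2)"
    and "(\<integral>x. (inner_d d v x)^2 \<partial>gauss d) = (norm_d d v)^2"
proof -
  have eq: "(inner_d d v x)^2 = (\<Sum>j<d. \<Sum>l<d. v j * v l * (x j * x l))" for x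
    unfolding inner_d_def power2_eq_square sum_product by (simp add: algebra_simps)
  have ii: "integrable (gauss d) (\<lambda>x. v j * v l * (x j * x l))" if "j < d" "l < d" for j l
    using gauss_cross(1)[OF that] by simp
  show "integrable (gauss d) (\<lambda>x. (inner_d d v x)^2)"
    unfolding eq by (rule Bochner_Integration.integrable_sum, rule Bochner_Integration.integrable_sum, rule ii) auto
  have "(\<integral>x. (inner_d d v x)^2 \<partial>gauss d) = (\<integral>x. (\<Sum>j<d. \<Sum>l<d. v j * v l * (x j * x l)) \<partial>gauss d)"
    unfolding eq ..
  also have "\<dots> = (\<Sum>j<d. (\<integral>x. (\<Sum>l<d. v j * v l * (x j * x l)) \<partial>gauss d))"
    by (rule Bochner_Integration.integral_sum) (auto intro!: Bochner_Integration.integrable_sum ii)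
  also have "\<dots> = (\<Sum>j<d. \<Sum>l<d. (\<integral>x. v j * v l * (x j * x l) \<partial>gauss d))"
    by (intro sum.cong refl Bochner_Integration.integral_sum ii) auto
  also have "\<dots> = (\<Sum>j<d. \<Sum>l<d. v j * v l * (if j = l then 1 else 0))"
    by (intro sum.cong refl) (simp only: integral_mult_right_zero gauss_cross(2) lessThan_iff)
  also have "\<dots> = (\<Sum>j<d. (v j)^2)"
    by (simp add: power2_eq_square if_distrib cong: if_cong)
  also have "\<dots> = (norm_d d v)^2"
    unfolding norm_d_def using sum_nonneg[of "{..<d}" "\<lambda>j. (v j)^2"] by simp
  finally show "(\<integral>x. (inner_d d v x)^2 \<partial>gauss d) = (norm_d d v)^2" .
qed

lemma relu_lip: "(relu a - relu b)^2 \<le> (a - b)^2"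
proof -
  have "\<bar>relu a - relu b\<bar> \<le> \<bar>a - b\<bar>" unfolding relu_def by (simp add: max_def abs_if)
  then have "\<bar>relu a - relu b\<bar>^2 \<le> \<bar>a - b\<bar>^2" by (rule power_mono) simp
  then show ?thesis by (simp only: power2_abs)
qed

lemma relu_sq: "(relu b)^2 \<le> b^2"
  unfolding relu_def by (auto simp: max_def)

lemma sq_two: "((p::real) + q)^2 \<le> 2 * (p^2 + q^2)"
  using sum_squares_ge_zero[of "p - q" 0] by (simp add: power2_eq_square algebra_simps)

theorem lemmaA2:
  shows "\<exists>C>0. \<forall>(d::nat) (k::nat) (R::real) lam u lam' u'.
     k \<ge> 1 \<longrightarrow> R > 0 \<longrightarrow>
     (\<forall>i<k. norm_d d (u i) = 1) \<longrightarrow> (\<forall>i<k. norm_d d (u' i) = 1) \<longrightarrow>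
     (\<Sum>i<k. \<bar>lam i\<bar>) \<le> R \<longrightarrow> (\<Sum>i<k. \<bar>lam' i\<bar>) \<le> R \<longrightarrow>
     L2norm d (\<lambda>x. relu_net d k lam u x - relu_net d k lam' u' x)
       \<le> C * real k * max 1 R * d_param d k lam u lam' u'"
proof (intro exI[of _ 2] conjI allI impI)
  fix d k :: nat and R :: real and lam lam' :: "nat \<Rightarrow> real" and u u' :: "nat \<Rightarrow> nat \<Rightarrow> real"
  assume k1: "k \<ge> 1" and R0: "R > 0" and nu: "\<forall>i<k. norm_d d (u i) = 1"
    and nu': "\<forall>i<k. norm_d d (u' i) = 1" and sl: "(\<Sum>i<k. \<bar>lam i\<bar>) \<le> R"
    and sl': "(\<Sum>i<k. \<bar>lam' i\<bar>) \<le> R"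
  define F where "F = (\<lambda>\<pi>. Max ((\<lambda>i. \<bar>lam i - lam' (\<pi> i)\<bar> + norm_d d (\<lambda>j. u i j - u' (\<pi> i) j)) ` {..<k}))"
  define D where "D = d_param d k lam u lam' u'"
  have Deq: "D = Min (F ` {\<pi>. \<pi> permutes {..<k}})"
    unfolding D_def d_param_def F_def by (rule arg_cong[where f=Min]) blast
  have "D \<in> F ` {\<pi>. \<pi> permutes {..<k}}"
    unfolding Deq by (rule Min_in) (auto intro: finite_permutations permutes_id)
  then obtain \<pi> where pi: "\<pi> permutes {..<k}" and DF: "D = F \<pi>" by auto
  define \<delta> where "\<delta> = (\<lambda>i. lam i - lam' (\<pi> i))"
  define w where "w = (\<lambda>i j. u i j - u' (\<pi> i) j)"
  have bnd: "\<bar>\<delta> i\<bar> + norm_d d (w i) \<le> D" if "i < k" for i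
    unfolding DF F_def \<delta>_def w_def by (rule Max_ge) (use that in auto)
  have nn: "norm_d d v \<ge> 0" for v unfolding norm_d_def by (intro real_sqrt_ge_zero sum_nonneg) simp
  have D0: "D \<ge> 0" using bnd[of 0] k1 nn[of "w 0"] by linarith
  have piu: "norm_d d (u' (\<pi> i)) = 1" if "i < k" for i
    using nu' permutes_in_image[OF pi] that by auto
  have lamR: "\<bar>lam i\<bar> \<le> R" if "i < k" for i
    using member_le_sum[of i "{..<k}" "\<lambda>i. \<bar>lam i\<bar>"] that sl by auto
  define A where "A = (\<lambda>i x. inner_d d (u i) x)"
  define B where "B = (\<lambda>i x. inner_d d (u' (\<pi> i)) x)"
  have AB: "A i x - B i x = inner_d d (w i) x" for i x
    unfolding A_def B_def inner_d_def w_def by (simp add: sum_subtractf[symmetric] algebra_simps)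
  define a where "a = (\<lambda>i x. lam i * (relu (A i x) - relu (B i x)) + \<delta> i * relu (B i x))"
  have feq: "relu_net d k lam u x - relu_net d k lam' u' x = (\<Sum>i<k. a i x)" for x
  proof -
    have "relu_net d k lam' u' x = (\<Sum>i<k. lam' (\<pi> i) * relu (B i x))"
      unfolding relu_net_def B_def using sum.permute[OF pi, of "\<lambda>i. lam' i * relu (inner_d d (u' i) x)"]
      by (simp add: comp_def)
    then show ?thesis unfolding relu_net_def a_def A_def \<delta>_def
      by (simp add: sum_subtractf[symmetric] algebra_simps)
  qed
  define G where "G = (\<lambda>x. 2 * real k * (\<Sum>i<k. (lam i)^2 * (inner_d d (w i) x)^2 + (\<delta> i)^2 * (B i x)^2))"
  have ptw: "(relu_net d k lam u x - relu_net d k lam' u' x)^2 \<le> G x" for x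
  proof -
    have "(\<Sum>i<k. a i x)^2 \<le> (\<Sum>i<k. (a i x)^2) * real k"
      using sum_squared_le_sum_of_squares[of "\<lambda>i. a i x" "{..<k}"] by simp
    also have "\<dots> \<le> (\<Sum>i<k. 2 * ((lam i)^2 * (inner_d d (w i) x)^2 + (\<delta> i)^2 * (B i x)^2)) * real k"
    proof (intro mult_right_mono sum_mono)
      fix i
      have "(a i x)^2 \<le> 2 * ((lam i * (relu (A i x) - relu (B i x)))^2 + (\<delta> i * relu (B i x))^2)"
        unfolding a_def by (rule sq_two)
      also have "\<dots> \<le> 2 * ((lam i)^2 * (inner_d d (w i) x)^2 + (\<delta> i)^2 * (B i x)^2)"
        unfolding power_mult_distrib AB[symmetric]
        by (intro mult_left_mono add_mono mult_left_mono relu_lip relu_sq) auto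
      finally show "(a i x)^2 \<le> 2 * ((lam i)^2 * (inner_d d (w i) x)^2 + (\<delta> i)^2 * (B i x)^2)" .
    qed simp
    also have "\<dots> = G x" unfolding G_def by (simp only: sum_distrib_left[symmetric]) (simp add: mult_ac)
    finally show ?thesis using feq by simp
  qed
  have Bi: "integrable (gauss d) (\<lambda>x. (B i x)^2)" for i unfolding B_def by (rule gauss_inner_sq(1))
  have Wi: "integrable (gauss d) (\<lambda>x. (inner_d d (w i) x)^2)" for i by (rule gauss_inner_sq(1))
  have Gint: "integrable (gauss d) G"
    unfolding G_def by (intro integrable_mult_right Bochner_Integration.integrable_sum Bochner_Integration.integrable_add Bi Wi)
  have G0: "G x \<ge> 0" for x unfolding G_def by (intro mult_nonneg_nonneg sum_nonneg add_nonneg_nonneg) auto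
  have "(\<integral>x. (relu_net d k lam u x - relu_net d k lam' u' x)^2 \<partial>gauss d) \<le> (\<integral>x. G x \<partial>gauss d)"
    by (rule integral_mono'[OF Gint ptw G0])
  also have "(\<integral>x. G x \<partial>gauss d) = 2 * real k * (\<Sum>i<k. (lam i)^2 * (norm_d d (w i))^2 + (\<delta> i)^2 * (norm_d d (u' (\<pi> i)))^2)"
  proof -
    have T: "(\<integral>x. (lam i)^2 * (inner_d d (w i) x)^2 + (\<delta> i)^2 * (B i x)^2 \<partial>gauss d)
       = (lam i)^2 * (norm_d d (w i))^2 + (\<delta> i)^2 * (norm_d d (u' (\<pi> i)))^2" for i
    proof -
      have "(\<integral>x. (lam i)^2 * (inner_d d (w i) x)^2 + (\<delta> i)^2 * (B i x)^2 \<partial>gauss d)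
         = (\<integral>x. (lam i)^2 * (inner_d d (w i) x)^2 \<partial>gauss d) + (\<integral>x. (\<delta> i)^2 * (B i x)^2 \<partial>gauss d)"
        by (rule Bochner_Integration.integral_add; intro integrable_mult_right Bi Wi)
      also have "\<dots> = (lam i)^2 * (norm_d d (w i))^2 + (\<delta> i)^2 * (norm_d d (u' (\<pi> i)))^2"
        unfolding B_def by (simp only: integral_mult_right_zero gauss_inner_sq(2))
      finally show ?thesis .
    qed
    have "(\<integral>x. G x \<partial>gauss d) = 2 * real k * (\<Sum>i<k. (\<integral>x. (lam i)^2 * (inner_d d (w i) x)^2 + (\<delta> i)^2 * (B i x)^2 \<partial>gauss d))"
      unfolding G_def integral_mult_right_zero
      by (rule arg_cong[where f="\<lambda>t. 2 * real k * t"], rule Bochner_Integration.integral_sum,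
          intro Bochner_Integration.integrable_add integrable_mult_right Bi Wi)
    then show ?thesis by (simp only: T)
  qed
  also have "\<dots> \<le> 2 * real k * (\<Sum>i<k. \<bar>lam i\<bar> * R * D^2 + D^2)"
  proof (intro mult_left_mono sum_mono)
    fix i assume i: "i \<in> {..<k}"
    have w: "norm_d d (w i) \<le> D" "\<bar>\<delta> i\<bar> \<le> D" using bnd[of i] i nn[of "w i"] by auto
    have l1: "(lam i)^2 = \<bar>lam i\<bar> * \<bar>lam i\<bar>" by (simp add: power2_eq_square)
    have l2: "(lam i)^2 \<le> \<bar>lam i\<bar> * R" unfolding l1
      using lamR[of i] i by (intro mult_left_mono) auto
    have l3: "(norm_d d (w i))^2 \<le> D^2" using w(1) nn[of "w i"] by (rule power_mono)
    have l4: "(\<delta> i)^2 \<le> D^2" using w(2) by (metis abs_ge_zero power2_abs power_mono)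
    have l5: "(lam i)^2 * (norm_d d (w i))^2 \<le> (\<bar>lam i\<bar> * R) * D^2"
      using l2 l3 by (rule mult_mono) (use R0 in auto)
    show "(lam i)^2 * (norm_d d (w i))^2 + (\<delta> i)^2 * (norm_d d (u' (\<pi> i)))^2 \<le> \<bar>lam i\<bar> * R * D^2 + D^2"
      using l5 l4 piu[of i] i by simp
  qed simp
  also have "\<dots> = 2 * real k * ((\<Sum>i<k. \<bar>lam i\<bar>) * R * D^2 + real k * D^2)"
    by (simp add: sum.distrib sum_distrib_right)
  also have "\<dots> \<le> 2 * real k * (R * R * D^2 + real k * D^2)"
    using sl R0 by (intro mult_left_mono add_mono mult_right_mono) auto
  also have "\<dots> \<le> (2 * real k * max 1 R * D)^2"
  proof -
    have "R * R \<le> max 1 R ^ 2" using R0 by (simp add: power2_eq_square mult_mono)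
    moreover have "1 \<le> max 1 R ^ 2" by (simp add: one_le_power)
    moreover have "max 1 R ^ 2 \<le> real k * max 1 R ^ 2"
      using mult_right_mono[of 1 "real k" "max 1 R ^ 2"] k1 by simp
    moreover have "real k \<le> real k * max 1 R ^ 2"
      using mult_left_mono[of 1 "max 1 R ^ 2" "real k"] \<open>1 \<le> max 1 R ^ 2\<close> by simp
    ultimately have "R * R + real k \<le> 2 * real k * max 1 R ^ 2" by linarith
    hence "2 * real k * ((R * R + real k) * D^2) \<le> 2 * real k * ((2 * real k * max 1 R ^ 2) * D^2)"
      by (intro mult_left_mono mult_right_mono) auto
    thus ?thesis by (simp add: power2_eq_square algebra_simps)
  qed
  finally have I: "(\<integral>x. (relu_net d k lam u x - relu_net d k lam' u' x)^2 \<partial>gauss d) \<le> (2 * real k * max 1 R * D)^2" .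
  have "L2norm d (\<lambda>x. relu_net d k lam u x - relu_net d k lam' u' x) \<le> sqrt ((2 * real k * max 1 R * D)^2)"
    unfolding L2norm_def by (rule real_sqrt_le_mono[OF I])
  also have "\<dots> = 2 * real k * max 1 R * D" using D0 by simp
  finally show "L2norm d (\<lambda>x. relu_net d k lam u x - relu_net d k lam' u' x) \<le> 2 * real k * max 1 R * d_param d k lam u lam' u'"
    unfolding D_def .
qed (simp)

end
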